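(* Let $n$ be a positive integer and let $\varphi,\phi\in\mathcal{H}[1,n]$ with $\varphi(z)\phi(z)\neq 0$ in $\mathbb{D}$. Let $\lambda,\eta,\gamma,\delta$ be complex numbers with $\eta\neq 0$ and $\lambda+\delta=\eta+\gamma=1$, and let $\alpha,\beta$ be non-negative real numbers with $\beta\neq 0$. Let $g\in\mathcal{A}_n$ and suppose that $$Q(z)=\lambda\frac{zg'(z)}{g(z)}+\frac{z\varphi'(z)}{\varphi(z)}+\delta\prec\frac{1+z}{1-z}.$$ If $F$ is defined by $$F(z)=\left(\frac{\alpha+\beta}{\phi^{\beta}(z)g^{\lambda\alpha}(z)\varphi^{\alpha}(z)z^{\delta\alpha+\beta\gamma}}\int_0^z g^{\lambda\alpha}(t)\varphi^{\alpha}(t)t^{\beta+\delta\alpha-1}Q(t)\,dt\right)^{\frac{1}{\eta\beta}},$$ then $F\in\mathcal{A}_n$, $F(z)/z\neq 0$ in $\mathbb{D}$, and for $z\in\mathbb{D}$, $$\operatorname{Re}\left(\frac{\eta\frac{zF'(z)}{F(z)}+\frac{z\phi'(z)}{\phi(z)}+\gamma}{\lambda\frac{zg'(z)}{g(z)}+\frac{z\varphi'(z)}{\varphi(z)}+\delta}\right)>0.$$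
   Context: $\mathbb{D}$ is the open unit disk. $\mathcal{H}[1,n]$ is the class of functions analytic in $\mathbb{D}$ of the form $1+a_nz^n+\cdots$; $\mathcal{A}_n$ is the class of functions analytic in $\mathbb{D}$ of the form $z+a_{n+1}z^{n+1}+\cdots$. $f\prec F$ means $f=F\circ\omega$ for some analytic $\omega:\mathbb{D}\to\mathbb{D}$ with $\omega(0)=0$. Complex powers are understood as the analytic branches normalized at the origin. *)

theory Defs
  imports "HOL-Complex_Analysis.Complex_Analysis"
begin

text \<open>The class H[1,n]: analytic in the unit disk, of the form 1 + a_n z^n + ...\<close>
definition H1 :: "nat \<Rightarrow> (complex \<Rightarrow> complex) \<Rightarrow> bool" where
  "H1 n f \<longleftrightarrow> f holomorphic_on ball 0 1 \<and> f 0 = 1 \<and>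
     (\<forall>k. 1 \<le> k \<and> k \<le> n - 1 \<longrightarrow> (deriv ^^ k) f 0 = 0)"

text \<open>The class A_n: analytic in the unit disk, of the form z + a_(n+1) z^(n+1) + ...\<close>
definition An :: "nat \<Rightarrow> (complex \<Rightarrow> complex) \<Rightarrow> bool" where
  "An n f \<longleftrightarrow> f holomorphic_on ball 0 1 \<and> f 0 = 0 \<and> deriv f 0 = 1 \<and>
     (\<forall>k. 2 \<le> k \<and> k \<le> n \<longrightarrow> (deriv ^^ k) f 0 = 0)"

definition subordinate :: "(complex \<Rightarrow> complex) \<Rightarrow> (complex \<Rightarrow> complex) \<Rightarrow> bool" where
  "subordinate f F \<longleftrightarrow> (\<exists>w. w holomorphic_on ball 0 1 \<and> w ` ball 0 1 \<subseteq> ball 0 1 \<and> w 0 = 0 \<and>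
     (\<forall>z\<in>ball 0 1. f z = F (w z)))"

text \<open>Analytic logarithm of f on the unit disk normalized by L(0) = 0 (meaningful for
  f analytic, zero-free on the disk, f(0) = 1), and the corresponding normalized
  analytic branch of the power f^c.\<close>
definition nlog :: "(complex \<Rightarrow> complex) \<Rightarrow> complex \<Rightarrow> complex" where
  "nlog f = (SOME L. L holomorphic_on ball 0 1 \<and> L 0 = 0 \<and> (\<forall>z\<in>ball 0 1. exp (L z) = f z))"

definition npow :: "(complex \<Rightarrow> complex) \<Rightarrow> complex \<Rightarrow> complex \<Rightarrow> complex" where
  "npow f c z = exp (c * nlog f z)"

text \<open>z f'(z)/f(z) for f in A_n, with its removable value 1 at the origin.\<close>
definition zlogdA :: "(complex \<Rightarrow> complex) \<Rightarrow> complex \<Rightarrow> complex" where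
  "zlogdA f z = (if z = 0 then 1 else z * deriv f z / f z)"

text \<open>z f'(z)/f(z) for f with f(0) \<noteq> 0 (value 0 at the origin is automatic).\<close>
definition zlogd :: "(complex \<Rightarrow> complex) \<Rightarrow> complex \<Rightarrow> complex" where
  "zlogd f z = z * deriv f z / f z"

end

theory Submission
  imports Defs
begin



lemma nlog_props:
  assumes hol: "f holomorphic_on ball 0 1" and nz: "\<And>z. z \<in> ball 0 1 \<Longrightarrow> f z \<noteq> 0"
    and f0: "f 0 = 1"
  shows "nlog f holomorphic_on ball 0 1 \<and> nlog f 0 = 0 \<and> (\<forall>z \<in> ball 0 1. exp (nlog f z) = f z)"
proof -
  obtain L where L: "L holomorphic_on ball 0 1" "\<And>x. x \<in> ball 0 1 \<Longrightarrow> exp (L x) = f x"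
    using holomorphic_logarithm_exists[of "ball 0 1" f 0] hol nz by auto
  have e0: "exp (L 0) = 1" using L(2)[of 0] f0 by simp
  define M where "M = (\<lambda>x. L x - L 0)"
  have "M holomorphic_on ball 0 1 \<and> M 0 = 0 \<and> (\<forall>z \<in> ball 0 1. exp (M z) = f z)"
    using L e0 unfolding M_def by (auto intro!: holomorphic_intros simp: exp_diff)
  then show ?thesis unfolding nlog_def by (rule someI[where P="\<lambda>L. L holomorphic_on ball 0 1 \<and> L 0 = 0 \<and> (\<forall>z\<in>ball 0 1. exp (L z) = f z)"])
qed

lemma nlog_deriv:
  assumes hol: "f holomorphic_on ball 0 1" and nz: "\<And>z. z \<in> ball 0 1 \<Longrightarrow> f z \<noteq> 0"
    and f0: "f 0 = 1" and z: "z \<in> ball 0 1"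
  shows "deriv (nlog f) z = deriv f z / f z"
proof -
  note P = nlog_props[OF hol nz f0]
  have d1: "(nlog f has_field_derivative deriv (nlog f) z) (at z)"
    using P z by (meson holomorphic_derivI open_ball)
  have "((\<lambda>x. exp (nlog f x)) has_field_derivative exp (nlog f z) * deriv (nlog f) z) (at z)"
    using d1 by (auto intro!: derivative_eq_intros)
  then have "(f has_field_derivative exp (nlog f z) * deriv (nlog f) z) (at z)"
    apply (rule has_field_derivative_transform_within_open[where S="ball 0 1"])
    using P z by auto
  then have "deriv f z = f z * deriv (nlog f) z" using P z by (simp add: DERIV_imp_deriv)
  then show ?thesis using nz[OF z] by (simp add: field_simps)
qed

lemma npow_hol: "nlog f holomorphic_on S \<Longrightarrow> npow f c holomorphic_on S"
  unfolding npow_def by (auto intro!: holomorphic_intros)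

lemma npow_deriv:
  assumes "nlog f holomorphic_on ball 0 1" "z \<in> ball 0 1"
  shows "deriv (npow f c) z = c * deriv (nlog f) z * npow f c z"
proof -
  have d1: "(nlog f has_field_derivative deriv (nlog f) z) (at z)"
    using assms by (meson holomorphic_derivI open_ball)
  have "(npow f c has_field_derivative c * deriv (nlog f) z * npow f c z) (at z)"
    unfolding npow_def using d1 by (auto intro!: derivative_eq_intros simp: algebra_simps)
  then show ?thesis by (rule DERIV_imp_deriv)
qed



definition Zf :: "nat \<Rightarrow> (complex \<Rightarrow> complex) \<Rightarrow> bool" where
  "Zf m f \<longleftrightarrow> (\<forall>j<m. (deriv ^^ j) f 0 = 0)"

lemma hd_const: "(deriv ^^ Suc i) (\<lambda>w. c) z = (0::complex)"
proof (induction i arbitrary: z)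
  case 0 then show ?case by simp
next
  case (Suc i)
  have "(deriv ^^ Suc (Suc i)) (\<lambda>w. c) = (deriv ^^ Suc i) (deriv (\<lambda>w. c))"
    by (simp only: funpow_Suc_right o_def)
  also have "deriv (\<lambda>w. c) = (\<lambda>w. 0)" by (simp add: fun_eq_iff)
  finally show ?case using Suc by simp
qed

lemma hd_id: "(deriv ^^ i) (\<lambda>w. w) z = (if i = 0 then z else if i = 1 then 1 else (0::complex))"
proof (cases i)
  case 0 then show ?thesis by simp
next
  case (Suc k)
  have "(deriv ^^ Suc k) (\<lambda>w. w) = (deriv ^^ k) (deriv (\<lambda>w. w))"
    by (simp only: funpow_Suc_right o_def)
  also have "deriv (\<lambda>w::complex. w) = (\<lambda>w. 1)" by (simp add: fun_eq_iff)
  finally show ?thesis using Suc by (cases k) (auto simp: hd_const)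
qed

lemma hd_zmul:
  assumes "f holomorphic_on ball 0 1"
  shows "(deriv ^^ j) (\<lambda>w. w * f w) 0 = of_nat j * (deriv ^^ (j - 1)) f 0"
proof -
  have "(deriv ^^ j) (\<lambda>w. w * f w) 0 =
     (\<Sum>i = 0..j. of_nat (j choose i) * (deriv ^^ i) (\<lambda>w. w) 0 * (deriv ^^ (j-i)) f 0)"
    by (rule higher_deriv_mult) (auto intro!: holomorphic_intros assms)
  also have "\<dots> = (\<Sum>i = 0..j. if i = 1 then of_nat j * (deriv ^^ (j - 1)) f 0 else 0)"
    by (rule sum.cong) (auto simp: hd_id)
  also have "\<dots> = of_nat j * (deriv ^^ (j - 1)) f 0"
    by (cases j) (auto simp: sum.delta)
  finally show ?thesis .
qed

lemma Zf_mul: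
  assumes "f holomorphic_on ball 0 1" "g holomorphic_on ball 0 1" "Zf m f"
  shows "Zf m (\<lambda>w. f w * g w)"
  unfolding Zf_def
proof (intro allI impI)
  fix j assume j: "j < m"
  have "(deriv ^^ j) (\<lambda>w. f w * g w) 0 =
     (\<Sum>i = 0..j. of_nat (j choose i) * (deriv ^^ i) f 0 * (deriv ^^ (j-i)) g 0)"
    by (rule higher_deriv_mult) (auto intro!: assms)
  also have "\<dots> = 0"
    using assms(3) j by (intro sum.neutral) (auto simp: Zf_def)
  finally show "(deriv ^^ j) (\<lambda>w. f w * g w) 0 = 0" .
qed

lemma Zf_mul2:
  assumes "f holomorphic_on ball 0 1" "g holomorphic_on ball 0 1" "Zf m g"
  shows "Zf m (\<lambda>w. f w * g w)"
  using Zf_mul[OF assms(2,1,3)] by (simp add: mult.commute)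

lemma Zf_div:
  assumes f: "f holomorphic_on ball 0 1" and g: "g holomorphic_on ball 0 1" and g0: "g 0 \<noteq> 0"
    and Z: "Zf m (\<lambda>w. f w * g w)"
  shows "Zf m f"
  unfolding Zf_def
proof (intro allI)
  fix j show "j < m \<longrightarrow> (deriv ^^ j) f 0 = 0"
  proof (induction j rule: less_induct)
    case (less j)
    show ?case
    proof
      assume j: "j < m"
      have "(deriv ^^ j) (\<lambda>w. f w * g w) 0 =
         (\<Sum>i = 0..j. of_nat (j choose i) * (deriv ^^ i) f 0 * (deriv ^^ (j-i)) g 0)"
        by (rule higher_deriv_mult) (auto intro!: f g)
      also have "\<dots> = (\<Sum>i = 0..j. if i = j then (deriv ^^ j) f 0 * g 0 else 0)"
        using less j by (intro sum.cong) auto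
      also have "\<dots> = (deriv ^^ j) f 0 * g 0" by (simp add: sum.delta)
      finally show "(deriv ^^ j) f 0 = 0" using Z j g0 by (auto simp: Zf_def)
    qed
  qed
qed

lemma Zf_add:
  assumes "f holomorphic_on ball 0 1" "g holomorphic_on ball 0 1" "Zf m f" "Zf m g"
  shows "Zf m (\<lambda>w. f w + g w)"
  using assms unfolding Zf_def
  by (auto simp: higher_deriv_add[where S="ball 0 1"])

lemma Zf_diff:
  assumes "f holomorphic_on ball 0 1" "g holomorphic_on ball 0 1" "Zf m f" "Zf m g"
  shows "Zf m (\<lambda>w. f w - g w)"
  using assms unfolding Zf_def
  by (auto simp: higher_deriv_diff[where S="ball 0 1"])

lemma Zf_cong:
  assumes "f holomorphic_on ball 0 1" "g holomorphic_on ball 0 1" "\<And>w. w \<in> ball 0 1 \<Longrightarrow> f w = g w"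
  shows "Zf m f = Zf m g"
  unfolding Zf_def using higher_deriv_transform_within_open[OF assms(1,2) open_ball _ assms(3)]
  by auto

lemma Zf_zmul:
  assumes "f holomorphic_on ball 0 1" "Zf m f"
  shows "Zf (Suc m) (\<lambda>w. w * f w)"
  using assms unfolding Zf_def
proof (intro allI impI)
  fix j assume j: "j < Suc m"
  show "(deriv ^^ j) (\<lambda>w. w * f w) 0 = 0"
  proof (cases j)
    case 0 then show ?thesis by simp
  next
    case (Suc k)
    have "(deriv ^^ j) (\<lambda>w. w * f w) 0 = of_nat j * (deriv ^^ (j - 1)) f 0"
      by (rule hd_zmul[OF assms(1)])
    then show ?thesis using j assms Suc by (simp add: Zf_def)
  qed
qed

lemma hd_Suc: "(deriv ^^ Suc j) f = (deriv ^^ j) (deriv f)"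
  by (simp only: funpow_Suc_right o_def)



lemma ode_sol:
  assumes H: "H holomorphic_on ball 0 1" and c: "c > (0::real)"
  shows "\<exists>A. A holomorphic_on ball 0 1 \<and> (\<forall>z\<in>ball 0 1. z * deriv A z + of_real c * A z = H z)"
proof -
  define a where "a = (\<lambda>k. (deriv ^^ k) H 0 / fact k)"
  define b where "b = (\<lambda>k. a k / (of_nat k + of_real c))"
  have aser: "(\<lambda>k. a k * w^k) sums H w" if "w \<in> ball 0 1" for w
    using holomorphic_power_series[OF H that] by (simp add: a_def)
  have bsum: "summable (\<lambda>k. b k * w^k)" if w: "norm w < 1" for w
  proof -
    define K where "K = complex_of_real ((1 + norm w) / 2)"
    have nK: "norm K = (1 + norm w)/2" unfolding K_def norm_of_real by (simp add: abs_of_nonneg)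
    have "K \<in> ball 0 1" using nK w by simp
    then have "summable (\<lambda>k. a k * K^k)" using aser sums_summable by blast
    then have s1: "summable (\<lambda>k. norm (a k * w ^ k))"
      by (rule powser_insidea) (use nK w in auto)
    have cpos: "norm (of_nat k + complex_of_real c) \<ge> c" for k
    proof -
      have "of_nat k + complex_of_real c = of_real (real k + c)" by simp
      then show ?thesis using c by (simp only: norm_of_real)
    qed
    have "norm (b k * w^k) \<le> norm (a k * w ^ k) / c" for k
    proof -
      have "norm (b k * w^k) = norm (a k * w^k) / norm (of_nat k + complex_of_real c)"
        by (simp add: b_def norm_mult norm_divide)
      also have "\<dots> \<le> norm (a k * w ^ k) / c"
        by (rule divide_left_mono) (use cpos[of k] c in \<open>auto intro!: mult_pos_pos\<close>)
      finally show ?thesis .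
    qed
    then have "summable (\<lambda>k. norm (b k * w^k))"
      by (intro summable_comparison_test[OF _ summable_divide[OF s1, of c]]) auto
    then show ?thesis by (rule summable_norm_cancel)
  qed
  define A where "A = (\<lambda>w. \<Sum>k. b k * w^k)"
  have dA: "(A has_field_derivative (\<Sum>k. diffs b k * w^k)) (at w)" if w: "norm w < 1" for w
  proof -
    define K where "K = complex_of_real ((1 + norm w) / 2)"
    have nK: "norm K = (1 + norm w)/2" unfolding K_def norm_of_real by (simp add: abs_of_nonneg)
    show ?thesis unfolding A_def
      by (rule termdiffs_strong[OF bsum[of K]]) (use nK w in auto)
  qed
  have Ahol: "A holomorphic_on ball 0 1"
    unfolding holomorphic_on_def field_differentiable_def
    using dA has_field_derivative_at_within by (metis mem_ball_0)
  have "z * deriv A z + of_real c * A z = H z" if z: "z \<in> ball 0 1" for z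
  proof -
    have nz: "norm z < 1" using z by simp
    have dz: "deriv A z = (\<Sum>k. diffs b k * z^k)" using dA[OF nz] by (rule DERIV_imp_deriv)
    have sd: "summable (\<lambda>k. diffs b k * z^k)"
      by (rule termdiff_converges[of z 1]) (use nz bsum in auto)
    define T where "T = (\<lambda>k. of_nat k * b k * z^k)"
    have "(\<lambda>k. T (Suc k)) = (\<lambda>k. z * (diffs b k * z^k))"
      by (auto simp: T_def diffs_def fun_eq_iff)
    then have "(\<lambda>k. T (Suc k)) sums (z * deriv A z)"
      using sums_mult[OF summable_sums[OF sd], of z] dz by simp
    then have "T sums (z * deriv A z + T 0)" by (simp only: sums_Suc_iff)
    then have s1: "T sums (z * deriv A z)" by (simp add: T_def)
    have s2: "(\<lambda>k. of_real c * (b k * z^k)) sums (of_real c * A z)"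
      unfolding A_def by (rule sums_mult[OF summable_sums[OF bsum[OF nz]]])
    have "(\<lambda>k. T k + of_real c * (b k * z^k)) sums (z * deriv A z + of_real c * A z)"
      by (rule sums_add[OF s1 s2])
    moreover have "(\<lambda>k. T k + of_real c * (b k * z^k)) = (\<lambda>k. a k * z^k)"
    proof
      fix k
      have "of_nat k + complex_of_real c \<noteq> 0"
      proof -
        have "of_nat k + complex_of_real c = of_real (real k + c)" by simp
        then show ?thesis using c by (metis add_nonneg_pos of_nat_0_le_iff of_real_eq_0_iff order_less_irrefl)
      qed
      then have e: "(of_nat k + complex_of_real c) * b k = a k" by (simp add: b_def)
      have "T k + of_real c * (b k * z^k) = ((of_nat k + complex_of_real c) * b k) * z^k"
        by (simp add: T_def algebra_simps)
      then show "T k + of_real c * (b k * z^k) = a k * z^k" by (simp only: e)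
    qed
    ultimately show ?thesis using aser[OF z] sums_unique2 by metis
  qed
  then show ?thesis using Ahol by blast
qed



lemma powr_real_mult:
  assumes s: "s > 0" and z: "z \<noteq> 0"
  shows "(complex_of_real s * z) powr (complex_of_real e) = of_real (s powr e) * z powr (of_real e)"
proof -
  have "Ln (complex_of_real s * z) = of_real (ln s) + Ln z" using Ln_times_of_real[OF s z] Ln_of_real[OF s] by simp
  then show ?thesis using s z
    by (simp add: powr_def exp_add distrib_left exp_of_real flip: of_real_mult)
qed

lemma powr_m1_mult:
  assumes z: "(z::complex) \<noteq> 0"
  shows "z powr (e - 1) * z = z powr e"
proof -
  have "exp ((e - 1) * Ln z) = exp (e * Ln z) / z" using z by (simp add: left_diff_distrib exp_diff)
  then show ?thesis using z by (simp add: powr_def)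
qed

lemma cint:
  assumes H: "H holomorphic_on ball 0 1" and A: "A holomorphic_on ball 0 1" and c: "c > (0::real)"
    and ode: "\<And>z. z \<in> ball 0 1 \<Longrightarrow> z * deriv A z + of_real c * A z = H z"
    and z: "z \<in> ball 0 1" "z \<noteq> 0"
  shows "((\<lambda>t. t powr (of_real c - 1) * H t) has_contour_integral (z powr of_real c * A z)) (linepath 0 z)"
proof -
  define P where "P = (\<lambda>s. of_real (s powr c) * (z powr of_real c) * A (of_real s * z))"
  have inB: "of_real s * z \<in> ball 0 1" if "s \<in> {0..1}" for s
  proof -
    have "norm (of_real s * z) = \<bar>s\<bar> * norm z" by (simp add: norm_mult)
    also have "\<dots> \<le> norm z" using that by (auto intro: mult_left_le_one_le)
    finally show ?thesis using z by simp
  qed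
  have contA: "continuous_on (ball 0 1) A" using A holomorphic_on_imp_continuous_on by blast
  have c0: "continuous_on {0..1} (\<lambda>s::real. s powr c)"
      by (rule continuous_on_powr') (use c in \<open>auto intro!: continuous_intros\<close>)
  have c1: "continuous_on {0..1} (\<lambda>s::real. complex_of_real (s powr c))"
    using continuous_on_of_real[OF c0] .
  have c2: "continuous_on {0..1} (\<lambda>s. A (complex_of_real s * z))"
      by (rule continuous_on_compose2[OF contA]) (auto intro!: continuous_intros inB)
  have cP: "continuous_on {0..1} P"
    unfolding P_def by (intro continuous_on_mult c1 c2 continuous_on_const)
  have dP: "(P has_vector_derivative
      (of_real (c * s powr (c - 1)) * (z powr of_real c) * A (of_real s * z)
       + of_real (s powr c) * (z powr of_real c) * (deriv A (of_real s * z) * z))) (at s)"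
    if s: "s \<in> {0<..<1}" for s
  proof -
    have sB: "of_real s * z \<in> ball 0 1" using inB s by auto
    have d1: "((\<lambda>s. s powr c) has_real_derivative c * s powr (c - 1)) (at s)"
      by (rule has_real_derivative_powr) (use s in auto)
    have dA: "(A has_field_derivative deriv A (of_real s * z)) (at (of_real s * z))"
      using A sB by (meson holomorphic_derivI open_ball)
    have d2: "((\<lambda>s. A (complex_of_real s * z)) has_vector_derivative (deriv A (of_real s * z) * z)) (at s)"
    proof -
      have "((\<lambda>s. complex_of_real s * z) has_vector_derivative (of_real s * 0 + of_real 1 * z)) (at s)"
        by (rule has_vector_derivative_mult[OF has_vector_derivative_of_real[OF DERIV_ident] has_vector_derivative_const])
      then have "((\<lambda>s. complex_of_real s * z) has_vector_derivative z) (at s)" by simp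
      from field_vector_diff_chain_at[OF this dA]
      show ?thesis by (simp add: o_def mult.commute[of z])
    qed
    have d1': "((\<lambda>s. complex_of_real (s powr c)) has_vector_derivative of_real (c * s powr (c - 1))) (at s)"
      using d1 by (rule has_vector_derivative_of_real)
    show ?thesis unfolding P_def
      using has_vector_derivative_mult[OF has_vector_derivative_mult[OF d1' has_vector_derivative_const[of "z powr of_real c"]] d2]
      by (simp add: algebra_simps)
  qed
  have I: "((\<lambda>s. of_real (c * s powr (c - 1)) * (z powr of_real c) * A (of_real s * z)
       + of_real (s powr c) * (z powr of_real c) * (deriv A (of_real s * z) * z)) has_integral (P 1 - P 0)) {0..1}"
    by (rule fundamental_theorem_of_calculus_interior[OF _ cP dP]) auto
  have P10: "P 1 - P 0 = z powr of_real c * A z" by (simp add: P_def)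
  have eq: "(\<lambda>t. t powr (of_real c - 1) * H t) (linepath 0 z s) * (z - 0) =
      of_real (c * s powr (c - 1)) * (z powr of_real c) * A (of_real s * z)
       + of_real (s powr c) * (z powr of_real c) * (deriv A (of_real s * z) * z)"
    if s: "s \<in> {0<..<1}" for s
  proof -
    have sB: "of_real s * z \<in> ball 0 1" using inB s by auto
    have lp: "linepath 0 z s = of_real s * z" by (simp add: linepath_def scaleR_conv_of_real)
    have e1: "(of_real s * z) powr (of_real c - 1) = of_real (s powr (c - 1)) * z powr (of_real c - 1)"
      using powr_real_mult[of s z "c - 1"] s z by simp
    have e2: "z powr (of_real c - 1) * z = z powr of_real c" using powr_m1_mult[OF z(2)] .
    have e3: "s powr (c - 1) * s = s powr c" using s by (simp add: powr_diff)
    have "(\<lambda>t. t powr (of_real c - 1) * H t) (linepath 0 z s) * (z - 0)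
        = of_real (s powr (c - 1)) * (z powr (of_real c - 1) * z) * H (of_real s * z)"
      unfolding lp by (simp add: e1)
    also have "\<dots> = of_real (s powr (c - 1)) * z powr (of_real c) *
         (of_real s * z * deriv A (of_real s * z) + of_real c * A (of_real s * z))"
      by (simp add: e2 ode[OF sB])
    also have "\<dots> = of_real (c * s powr (c - 1)) * (z powr of_real c) * A (of_real s * z)
       + of_real (s powr (c - 1) * s) * (z powr of_real c) * (deriv A (of_real s * z) * z)"
      by (simp add: algebra_simps)
    finally show ?thesis by (simp only: e3)
  qed
  have "((\<lambda>s. (\<lambda>t. t powr (of_real c - 1) * H t) (linepath 0 z s) * (z - 0)) has_integral
      (z powr of_real c * A z)) {0..1}"
    using has_integral_spike_interior[of _ "P 1 - P 0" 0 1, OF I[unfolded cbox_interval[symmetric]]] eq P10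
    by simp
  then show ?thesis by (simp only: has_contour_integral_linepath)
qed



lemma alg_contra:
  fixes W Q D :: complex and a b c m :: real
  assumes c: "c = a + b" and a: "a \<ge> 0" and b: "b > 0" and Q: "Re Q > 0"
    and v0: "c * Re W = a * (cmod W)^2"
    and D: "D = of_real c * Q - (of_real b + of_real a * Q) * W"
    and XD: "(of_real c - 2 * of_real a * cnj W) * D = - of_real m" and m: "m \<ge> 0"
  shows False
proof -
  have cpos: "c > 0" using a b c by simp
  have Wn: "W * cnj W = of_real ((cmod W)^2)" by (rule complex_norm_square[symmetric])
  have Wr: "W + cnj W = of_real (2 * Re W)" by (simp add: complex_add_cnj)
  have E: "2 * of_real a * W * cnj W = of_real c * (W + cnj W)"
  proof -
    have "2 * of_real a * W * cnj W = of_real (2 * (a * (cmod W)^2))"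
      by (simp add: Wn mult.assoc)
    also have "\<dots> = of_real (c * (2 * Re W))"
    proof -
      have "2 * (a * (cmod W)^2) = c * (2 * Re W)" using v0 by simp
      then show ?thesis by (rule arg_cong)
    qed
    also have "\<dots> = of_real c * (W + cnj W)" by (simp add: Wr)
    finally show ?thesis .
  qed
  have S1: "(of_real c - 2 * of_real a * cnj W) * D =
      of_real c * (Q * (of_real c - of_real a * cnj W) + of_real b * cnj W)
      + (of_real b + of_real a * Q) * (2 * of_real a * W * cnj W - of_real c * (W + cnj W))"
    unfolding D by (simp add: algebra_simps)
  have S2: "of_real c * (Q * (of_real c - of_real a * cnj W) + of_real b * cnj W) = - of_real m"
    using S1 XD E by simp
  define \<mu> where "\<mu> = m / c"
  have mu: "\<mu> \<ge> 0" using m cpos by (simp add: \<mu>_def)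
  have S3: "Q * (of_real c - of_real a * cnj W) = - of_real \<mu> - of_real b * cnj W"
  proof -
    have "Q * (of_real c - of_real a * cnj W) + of_real b * cnj W = - of_real m / of_real c"
      using S2 cpos by (simp add: field_simps)
    then show ?thesis by (simp add: \<mu>_def field_simps)
  qed
  define N where "N = (cmod (of_real c - of_real a * W))^2"
  have Nc: "(of_real c - of_real a * W) * (of_real c - of_real a * cnj W) = complex_of_real N"
    unfolding N_def complex_norm_square by simp
  have S4: "Q * of_real N = (- of_real \<mu> - of_real b * cnj W) * (of_real c - of_real a * W)"
    using S3 Nc by (metis mult.commute mult.left_commute)
  have ReR: "Re ((- of_real \<mu> - of_real b * cnj W) * (of_real c - of_real a * W)) =
      - \<mu> * c + \<mu> * a * Re W - b * (c * Re W - a * (cmod W)^2)"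
    unfolding cmod_power2 by (simp add: algebra_simps power2_eq_square)
  have aRe: "a * Re W \<le> c"
  proof (cases "Re W \<le> 0")
    case True then show ?thesis using a cpos by (meson less_le_not_le mult_nonneg_nonpos order_trans)
  next
    case False
    have "(Re W)^2 \<le> (cmod W)^2" unfolding cmod_power2 by simp
    then have "c * Re W \<le> a * (Re W)^2 \<longrightarrow> True" by simp
    have "a * (Re W)^2 \<le> a * (cmod W)^2" using \<open>(Re W)^2 \<le> (cmod W)^2\<close> a by (rule mult_left_mono)
    then have "(a * Re W) * Re W \<le> c * Re W" using v0 by (simp add: power2_eq_square mult.assoc)
    then show ?thesis using False by simp
  qed
  have "N * Re Q = - \<mu> * (c - a * Re W)"
  proof -
    have "N * Re Q = Re (Q * of_real N)" by simp
    also have "\<dots> = - \<mu> * c + \<mu> * a * Re W - b * (c * Re W - a * (cmod W)^2)" using S4 ReR by simp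
    also have "\<dots> = - \<mu> * (c - a * Re W)" using v0 by (simp add: algebra_simps)
    finally show ?thesis .
  qed
  also have "\<dots> \<le> 0" using mu aRe by (simp add: mult_nonneg_nonneg)
  finally have "N * Re Q \<le> 0" .
  moreover have "N \<ge> 0" unfolding N_def by simp
  ultimately have "N = 0" using Q by (meson mult_pos_pos order_le_less not_le)
  then have cW: "of_real c = of_real a * W" unfolding N_def by simp
  then have a0: "a \<noteq> 0" using cpos by auto
  have "W = of_real (c / a)" using cW a0 by (simp add: field_simps)
  then have "cnj W = of_real (c / a)" by simp
  then have "of_real c - of_real a * cnj W = 0" using a0 by simp
  then have "- of_real \<mu> - of_real b * of_real (c / a) = (0::complex)"
    using S3 \<open>cnj W = of_real (c / a)\<close> by simp
  then have "complex_of_real (- \<mu> - b * (c / a)) = 0" by simp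
  then have "\<mu> + b * (c / a) = 0" by (simp only: of_real_eq_0_iff)
  moreover have "b * (c / a) > 0" using b cpos a a0 by simp
  ultimately show False using mu by linarith
qed



lemma vderiv:
  fixes g :: "real \<Rightarrow> complex"
  assumes g: "(g has_vector_derivative E) (at t)"
  shows "((\<lambda>t. c * Re (g t) - a * (cmod (g t))^2) has_real_derivative
           Re ((of_real c - 2 * of_real a * cnj (g t)) * E)) (at t)"
proof -
  have h: "((\<lambda>t. of_real c * g t - of_real a * (g t * cnj (g t))) has_vector_derivative
          (of_real c * E - of_real a * (g t * cnj E + E * cnj (g t)))) (at t)"
  proof -
    have g1: "((\<lambda>x. of_real c * g x) has_vector_derivative (of_real c * E + 0 * g t)) (at t)"
      by (rule has_vector_derivative_mult[OF has_vector_derivative_const g])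
    have g2: "((\<lambda>x. g x * cnj (g x)) has_vector_derivative (g t * cnj E + E * cnj (g t))) (at t)"
      by (rule has_vector_derivative_mult[OF g has_vector_derivative_cnj[OF g]])
    have g3: "((\<lambda>x. of_real a * (g x * cnj (g x))) has_vector_derivative
        (of_real a * (g t * cnj E + E * cnj (g t)) + 0 * (g t * cnj (g t)))) (at t)"
      by (rule has_vector_derivative_mult[OF has_vector_derivative_const g2])
    show ?thesis using has_vector_derivative_diff[OF g1 g3] by simp
  qed
  then have "((\<lambda>t. Re (of_real c * g t - of_real a * (g t * cnj (g t)))) has_field_derivative
          Re (of_real c * E - of_real a * (g t * cnj E + E * cnj (g t)))) (at t)"
    by (simp add: has_vector_derivative_complex_iff)
  moreover have "(\<lambda>t. Re (of_real c * g t - of_real a * (g t * cnj (g t)))) =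
      (\<lambda>t. c * Re (g t) - a * (cmod (g t))^2)"
    unfolding cmod_power2 by (simp add: fun_eq_iff power2_eq_square)
  moreover have "Re (of_real c * E - of_real a * (g t * cnj E + E * cnj (g t))) =
           Re ((of_real c - 2 * of_real a * cnj (g t)) * E)"
    by (simp add: algebra_simps)
  ultimately show ?thesis by simp
qed

lemma lift_real:
  assumes "(F has_field_derivative D) (at (complex_of_real t))"
  shows "((\<lambda>s. F (complex_of_real s)) has_vector_derivative D) (at t)"
proof -
  have "(complex_of_real has_vector_derivative of_real 1) (at t)"
    by (rule has_vector_derivative_of_real[OF DERIV_ident])
  from field_vector_diff_chain_at[OF this assms] show ?thesis by (simp add: o_def)
qed

lemma pos_main:
  fixes W Q :: "complex \<Rightarrow> complex" and a b c :: real
  assumes W: "W holomorphic_on ball 0 1" and W0: "W 0 = 1"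
    and ReQ: "\<And>z. z \<in> ball 0 1 \<Longrightarrow> Re (Q z) > 0"
    and c: "c = a + b" and a: "a \<ge> 0" and b: "b > 0"
    and ode: "\<And>z. z \<in> ball 0 1 \<Longrightarrow> z * deriv W z = of_real c * Q z - (of_real b + of_real a * Q z) * W z"
  shows "\<forall>z\<in>ball 0 1. c * Re (W z) - a * (cmod (W z))^2 > 0"
proof (rule ccontr)
  define v where "v = (\<lambda>z. c * Re (W z) - a * (cmod (W z))^2)"
  assume "\<not> (\<forall>z\<in>ball 0 1. c * Re (W z) - a * (cmod (W z))^2 > 0)"
  then obtain z1 where z1: "z1 \<in> ball 0 1" "v z1 \<le> 0" unfolding v_def by auto
  have contW: "continuous_on (ball 0 1) W" using W holomorphic_on_imp_continuous_on by blast
  have contv: "continuous_on (ball 0 1) v" unfolding v_def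
    by (intro continuous_intros contW)
  define R where "R = norm z1"
  have cbB: "cball 0 R \<subseteq> ball 0 1" using z1 unfolding R_def by auto
  define S where "S = cball 0 R \<inter> v -` {..0}"
  have clS: "closed S" unfolding S_def
    by (rule continuous_closed_preimage[OF continuous_on_subset[OF contv cbB] closed_cball closed_atMost])
  have cpS: "compact S" using clS bounded_subset[OF bounded_cball, of S 0 R]
    by (auto simp: compact_eq_bounded_closed S_def)
  have neS: "S \<noteq> {}" using z1 unfolding S_def R_def by auto
  obtain z0 where z0S: "z0 \<in> S" and z0min: "\<And>y. y \<in> S \<Longrightarrow> norm z0 \<le> norm y"
    using continuous_attains_inf[OF cpS neS continuous_on_norm_id] by blast
  have z0R: "norm z0 \<le> R" and vz0: "v z0 \<le> 0" using z0S unfolding S_def by auto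
  have z0B: "z0 \<in> ball 0 1" using z0R z1 unfolding R_def by auto
  have v0: "v 0 = b" unfolding v_def using W0 c by simp
  have inner: "v y > 0" if "norm y < norm z0" for y
  proof (rule ccontr)
    assume "\<not> v y > 0"
    then have "y \<in> S" using that z0R unfolding S_def by auto
    then show False using z0min[of y] that by simp
  qed
  have z0nz: "z0 \<noteq> 0" using vz0 v0 b by auto
  define r0 where "r0 = norm z0"
  have r0: "r0 > 0" "r0 < 1" using z0nz z0B unfolding r0_def by auto
  have circle: "v y \<ge> 0" if y: "norm y = r0" for y
  proof (rule ccontr)
    assume neg: "\<not> v y \<ge> 0"
    have yB: "y \<in> ball 0 1" using y r0 by simp
    obtain d where d: "d > 0" and dd: "\<And>x. x \<in> ball 0 1 \<Longrightarrow> dist x y < d \<Longrightarrow> dist (v x) (v y) < - v y"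
      using contv yB neg unfolding continuous_on_iff by (metis neg_0_less_iff_less not_le)
    define h where "h = min (d / (2 * r0)) (1/2)"
    have h: "h > 0" "h \<le> 1/2" "h * r0 < d"
    proof -
      show "h > 0" using d r0 by (simp add: h_def)
      show "h \<le> 1/2" by (simp add: h_def)
      have "h * r0 \<le> d / (2 * r0) * r0" unfolding h_def using r0 by (intro mult_right_mono) auto
      also have "\<dots> = d / 2" using r0 by simp
      finally show "h * r0 < d" using d by simp
    qed
    define x where "x = of_real (1 - h) * y"
    have nx: "norm x = (1 - h) * r0" unfolding x_def norm_mult norm_of_real using h y by simp
    have "norm x < norm z0" using nx h r0 unfolding r0_def by (simp add: mult_less_cancel_right2)
    then have vx: "v x > 0" by (rule inner)
    have "dist x y = h * r0"
    proof -
      have "x - y = - of_real h * y" unfolding x_def by (simp add: algebra_simps)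
      then show ?thesis using h y by (simp add: dist_norm norm_mult)
    qed
    moreover have "x \<in> ball 0 1"
    proof -
      have "(1 - h) * r0 \<le> 1 * r0" using h r0 by (intro mult_right_mono) auto
      then have "norm x < 1" using nx r0 by linarith
      then show ?thesis by simp
    qed
    ultimately have "dist (v x) (v y) < - v y" using h by (intro dd) auto
    then show False using vx neg by (simp add: dist_real_def)
  qed
  have vz0e: "v z0 = 0" using circle[of z0] vz0 unfolding r0_def by simp
  define Wd where "Wd = deriv W z0"
  have dW: "(W has_field_derivative Wd) (at z0)" unfolding Wd_def
    using W z0B by (meson holomorphic_derivI open_ball)
  define X where "X = of_real c - 2 * of_real a * cnj (W z0)"
  define D where "D = z0 * Wd"
  have dF1: "((\<lambda>w. W (w * z0)) has_field_derivative Wd * z0) (at (complex_of_real 1))"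
  proof -
    have "((\<lambda>w. w * z0) has_field_derivative z0) (at (complex_of_real 1))"
      by (auto intro!: derivative_eq_intros)
    from DERIV_chain2[OF _ this, of W Wd] dW show ?thesis by simp
  qed
  have f1: "((\<lambda>s. v (of_real s * z0)) has_real_derivative Re (X * D)) (at 1)"
  proof -
    have "((\<lambda>s. W (of_real s * z0)) has_vector_derivative Wd * z0) (at 1)"
      using lift_real[OF dF1] by simp
    from vderiv[OF this, of c a] show ?thesis
      unfolding v_def X_def D_def by (simp add: mult.commute)
  qed
  have rad: "Re (X * D) \<le> 0"
  proof (rule ccontr)
    assume "\<not> Re (X * D) \<le> 0"
    then obtain d where d: "d > 0" and dd: "\<And>h. h > 0 \<Longrightarrow> h < d \<Longrightarrow> v (of_real (1 - h) * z0) < v (of_real 1 * z0)"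
      using DERIV_pos_inc_left[OF f1] by force
    define h where "h = min (d/2) (1/2)"
    have h: "h > 0" "h < d" "h < 1" using d by (auto simp: h_def)
    have "norm (of_real (1 - h) * z0) < norm z0" unfolding norm_mult norm_of_real using h z0nz by simp
    then have "v (of_real (1 - h) * z0) > 0" by (rule inner)
    moreover have "v (of_real (1 - h) * z0) < 0" using dd[OF h(1,2)] vz0e by simp
    ultimately show False by simp
  qed
  have dF2: "((\<lambda>w. W (exp (\<i> * w) * z0)) has_field_derivative Wd * (\<i> * z0)) (at (complex_of_real 0))"
  proof -
    have "((\<lambda>w. exp (\<i> * w) * z0) has_field_derivative \<i> * z0) (at (complex_of_real 0))"
      by (auto intro!: derivative_eq_intros)
    from DERIV_chain2[OF _ this, of W Wd] dW show ?thesis by simp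
  qed
  have f2: "((\<lambda>s. v (exp (\<i> * of_real s) * z0)) has_real_derivative Re (X * (Wd * (\<i> * z0)))) (at 0)"
  proof -
    have "((\<lambda>s. W (exp (\<i> * of_real s) * z0)) has_vector_derivative Wd * (\<i> * z0)) (at 0)"
      using lift_real[OF dF2] by simp
    from vderiv[OF this, of c a] show ?thesis
      unfolding v_def X_def by simp
  qed
  have "Re (X * (Wd * (\<i> * z0))) = 0"
  proof (rule DERIV_local_min[OF f2, of 1])
    show "\<forall>y. \<bar>0 - y\<bar> < 1 \<longrightarrow> v (exp (\<i> * of_real 0) * z0) \<le> v (exp (\<i> * of_real y) * z0)"
    proof (intro allI impI)
      fix y :: real
      have "norm (exp (\<i> * of_real y) * z0) = r0" unfolding r0_def by (simp add: norm_mult)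
      then show "v (exp (\<i> * of_real 0) * z0) \<le> v (exp (\<i> * of_real y) * z0)"
        using circle vz0e by simp
    qed
  qed simp
  then have imXD: "Im (X * D) = 0" unfolding D_def by (simp add: algebra_simps)
  define m where "m = - Re (X * D)"
  have XD: "X * D = - of_real m" unfolding m_def using imXD by (simp add: complex_eq_iff)
  have m: "m \<ge> 0" using rad unfolding m_def by simp
  have Deq: "D = of_real c * Q z0 - (of_real b + of_real a * Q z0) * W z0"
    unfolding D_def Wd_def by (rule ode[OF z0B])
  have vv: "c * Re (W z0) = a * (cmod (W z0))^2" using vz0e unfolding v_def by simp
  show False
    by (rule alg_contra[OF c a b ReQ[OF z0B] vv Deq XD[unfolded X_def] m])
qed



lemma g_nz:
  assumes g: "g holomorphic_on ball 0 1" and g0: "g 0 = 0" and dg0: "deriv g 0 = 1"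
    and R: "R holomorphic_on ball 0 1" and lam: "lam \<noteq> 0"
    and eq: "\<And>z. z \<in> ball 0 1 \<Longrightarrow> g z \<noteq> 0 \<Longrightarrow> lam * z * deriv g z = R z * g z"
    and z1: "z1 \<in> ball 0 1" "z1 \<noteq> 0"
  shows "g z1 \<noteq> 0"
proof
  assume gz1: "g z1 = 0"
  have nc: "\<not> g constant_on ball 0 1"
  proof
    assume "g constant_on ball 0 1"
    then have "\<And>w. w \<in> ball 0 1 \<Longrightarrow> g w = 0" using g0 unfolding constant_on_def
      by (metis centre_in_ball zero_less_one)
    then have "deriv g 0 = deriv (\<lambda>w. 0) 0"
      by (intro complex_derivative_transform_within_open[OF g _ open_ball]) auto
    then show False using dg0 by simp
  qed
  obtain h r n where n: "0 < n" and r: "0 < r" and sub: "ball z1 r \<subseteq> ball 0 1"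
    and h: "h holomorphic_on ball z1 r"
    and gh: "\<And>w. w \<in> ball z1 r \<Longrightarrow> g w = (w - z1)^n * h w"
    and hnz: "\<And>w. w \<in> ball z1 r \<Longrightarrow> h w \<noteq> 0"
    using holomorphic_factor_zero_nonconstant[OF g open_ball connected_ball z1(1) gz1 nc] by metis
  have dg: "deriv g w = of_nat n * (w - z1)^(n - 1) * h w + (w - z1)^n * deriv h w"
    if w: "w \<in> ball z1 r" for w
  proof -
    have dh: "(h has_field_derivative deriv h w) (at w)"
      using h w by (meson holomorphic_derivI open_ball)
    have "((\<lambda>w. (w - z1)^n * h w) has_field_derivative
        of_nat n * (w - z1)^(n - 1) * h w + (w - z1)^n * deriv h w) (at w)"
      by (auto intro!: derivative_eq_intros dh simp: algebra_simps)
    then have "(g has_field_derivative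
        of_nat n * (w - z1)^(n - 1) * h w + (w - z1)^n * deriv h w) (at w)"
      by (rule has_field_derivative_transform_within_open[where S="ball z1 r"]) (use w gh in auto)
    then show ?thesis by (rule DERIV_imp_deriv)
  qed
  define L where "L = (\<lambda>w. lam * w * (of_nat n * h w + (w - z1) * deriv h w) - R w * (w - z1) * h w)"
  have Lz: "L w = 0" if w: "w \<in> ball z1 r" "w \<noteq> z1" for w
  proof -
    have wB: "w \<in> ball 0 1" using w sub by auto
    have p: "(w - z1)^n = (w - z1)^(n-1) * (w - z1)" using n by (metis power_minus_mult)
    have nz: "(w - z1)^(n-1) \<noteq> 0" using w by simp
    have gnz: "g w \<noteq> 0" using gh[OF w(1)] hnz[OF w(1)] w by simp
    have "lam * w * deriv g w = R w * g w" by (rule eq[OF wB gnz])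
    then have "lam * w * (of_nat n * (w - z1)^(n - 1) * h w + (w - z1)^(n-1) * (w - z1) * deriv h w)
        = R w * ((w - z1)^(n-1) * (w - z1) * h w)"
      using dg[OF w(1)] gh[OF w(1)] p by simp
    then have "(w - z1)^(n-1) * L w = 0" unfolding L_def by (simp add: algebra_simps)
    then show ?thesis using nz by (metis mult_eq_0_iff)
  qed
  have contL: "continuous_on (ball z1 r) L" unfolding L_def
    using h sub R
    by (intro continuous_intros holomorphic_on_imp_continuous_on holomorphic_deriv open_ball
        holomorphic_on_subset[OF R sub])
  then have "isCont L z1" using r by (simp add: continuous_on_eq_continuous_at)
  then have t1: "(L \<longlongrightarrow> L z1) (at z1)" by (simp add: isCont_def)
  have "eventually (\<lambda>w. w \<in> ball z1 r \<and> w \<noteq> z1) (at z1)"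
    using r by (auto simp: eventually_at dist_commute intro!: exI[of _ r])
  then have "eventually (\<lambda>w. L w = 0) (at z1)" by (rule eventually_mono) (use Lz in auto)
  then have t2: "(L \<longlongrightarrow> 0) (at z1)" by (rule tendsto_eventually)
  have "L z1 = 0" using tendsto_unique[OF at_neq_bot t1 t2] .
  then have "lam * z1 * (of_nat n * h z1) = 0" unfolding L_def by simp
  moreover have "h z1 \<noteq> 0" using hnz r by simp
  ultimately show False using lam z1 n by simp
qed



theorem mainTheorem5:
  fixes n :: nat and \<phi>1 \<phi>2 g :: "complex \<Rightarrow> complex"
    and lam \<eta> \<gamma> \<delta> :: complex and \<alpha> \<beta> :: real
    and Q K F :: "complex \<Rightarrow> complex"
  assumes n: "n \<ge> 1"
    and phi1: "H1 n \<phi>1" and phi2: "H1 n \<phi>2"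
    and nz: "\<forall>z\<in>ball 0 1. \<phi>1 z * \<phi>2 z \<noteq> 0"
    and eta: "\<eta> \<noteq> 0" and ld: "lam + \<delta> = 1" and eg: "\<eta> + \<gamma> = 1"
    and alpha: "\<alpha> \<ge> 0" and beta: "\<beta> \<ge> 0" "\<beta> \<noteq> 0"
    and g: "An n g"
    and Q_def: "Q = (\<lambda>z. lam * zlogdA g z + zlogd \<phi>1 z + \<delta>)"
    and sub: "subordinate Q (\<lambda>z. (1 + z) / (1 - z))"
    and K_def: "K = (\<lambda>z. if z = 0 then 1 else
         of_real (\<alpha> + \<beta>) /
           (npow \<phi>2 (of_real \<beta>) z * npow (\<lambda>t. if t = 0 then 1 else g t / t) (lam * of_real \<alpha>) z
            * npow \<phi>1 (of_real \<alpha>) z * z powr (of_real (\<alpha> + \<beta>)))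
         * contour_integral (linepath 0 z)
             (\<lambda>t. npow (\<lambda>t. if t = 0 then 1 else g t / t) (lam * of_real \<alpha>) t
                  * npow \<phi>1 (of_real \<alpha>) t * t powr (of_real (\<alpha> + \<beta> - 1)) * Q t))"
    and F_def: "F = (\<lambda>z. z * npow K (1 / (\<eta> * of_real \<beta>)) z)"
  shows "(\<forall>z\<in>ball 0 1. K z \<noteq> 0) \<and> An n F \<and> (\<forall>z\<in>ball 0 1 - {0}. F z / z \<noteq> 0) \<and>
         (\<forall>z\<in>ball 0 1. Re ((\<eta> * zlogdA F z + zlogd \<phi>2 z + \<gamma>) /
                                 (lam * zlogdA g z + zlogd \<phi>1 z + \<delta>)) > 0)"
proof -
  define B where "B = ball (0::complex) 1"
  have Bo: "open B" unfolding B_def by simp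
  have B0: "0 \<in> B" unfolding B_def by simp
  have p1: "\<phi>1 holomorphic_on B" "\<phi>1 0 = 1" "\<And>k. 1 \<le> k \<Longrightarrow> k \<le> n - 1 \<Longrightarrow> (deriv ^^ k) \<phi>1 0 = 0"
    using phi1 unfolding H1_def B_def by auto
  have p2: "\<phi>2 holomorphic_on B" "\<phi>2 0 = 1" "\<And>k. 1 \<le> k \<Longrightarrow> k \<le> n - 1 \<Longrightarrow> (deriv ^^ k) \<phi>2 0 = 0"
    using phi2 unfolding H1_def B_def by auto
  have gA: "g holomorphic_on B" "g 0 = 0" "deriv g 0 = 1" "\<And>k. 2 \<le> k \<Longrightarrow> k \<le> n \<Longrightarrow> (deriv ^^ k) g 0 = 0"
    using g unfolding An_def B_def by auto
  have nz1: "\<And>z. z \<in> B \<Longrightarrow> \<phi>1 z \<noteq> 0" and nz2: "\<And>z. z \<in> B \<Longrightarrow> \<phi>2 z \<noteq> 0"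
    using nz unfolding B_def by auto
  have Qz: "\<And>z. Q z = lam * zlogdA g z + zlogd \<phi>1 z + \<delta>" by (simp add: Q_def)
  obtain w where w: "w holomorphic_on B" "w ` B \<subseteq> B" "w 0 = 0" "\<And>z. z \<in> B \<Longrightarrow> Q z = (1 + w z) / (1 - w z)"
    using sub unfolding subordinate_def B_def by auto
  have wlt: "\<And>z. z \<in> B \<Longrightarrow> norm (w z) < 1"
  proof -
    fix z assume "z \<in> B"
    then have "w z \<in> B" using w(2) by blast
    then show "norm (w z) < 1" unfolding B_def by simp
  qed
  have w1: "\<And>z. z \<in> B \<Longrightarrow> 1 - w z \<noteq> 0" using wlt by (metis norm_one order_less_irrefl right_minus_eq)
  have "(\<lambda>z. (1 + w z) / (1 - w z)) holomorphic_on B"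
    using w1 by (intro holomorphic_intros w(1)) auto
  then have Qhol: "Q holomorphic_on B"
    by (rule holomorphic_transform) (simp add: w(4))
  have ReQ: "\<And>z. z \<in> B \<Longrightarrow> Re (Q z) > 0"
  proof -
    fix z assume z: "z \<in> B"
    define u where "u = w z"
    have u: "norm u < 1" using wlt[OF z] by (simp add: u_def)
    have "(cmod u)^2 < 1" using u by (simp add: power_less_one_iff)
    then have "(Re u)^2 + (Im u)^2 < 1" unfolding cmod_power2 .
    then have num: "(1 + Re u) * (1 - Re u) - Im u * Im u > 0" by (simp add: algebra_simps power2_eq_square)
    have den: "(Re (1 - u))^2 + (Im (1 - u))^2 > 0" using w1[OF z] unfolding u_def[symmetric]
      by (metis complex_eq_iff sum_power2_gt_zero_iff zero_complex.sel(1) zero_complex.sel(2))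
    have "Re ((1 + u) / (1 - u)) = ((1 + Re u) * (1 - Re u) - Im u * Im u) / ((Re (1 - u))^2 + (Im (1 - u))^2)"
      unfolding Re_divide by simp
    also have "\<dots> > 0" using num den by simp
    finally show "Re (Q z) > 0" using w(4)[OF z] by (simp add: u_def)
  qed
  have Qnz: "\<And>z. z \<in> B \<Longrightarrow> Q z \<noteq> 0" using ReQ by fastforce
  have Q0: "Q 0 = 1" using ld by (simp add: Qz zlogdA_def zlogd_def)
  define G where "G = (\<lambda>t. if t = 0 then 1 else g t / t)"
  have gG: "g = (\<lambda>t. t * G t)" by (auto simp: fun_eq_iff G_def gA(2))
  have Ghol: "G holomorphic_on B"
  proof -
    have "(\<lambda>z. if z = 0 then deriv g 0 else (g z - g 0) / (z - 0)) holomorphic_on B"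
      by (rule pole_lemma[OF gA(1)]) (simp add: Bo B0 interior_open)
    moreover have "(\<lambda>z. if z = 0 then deriv g 0 else (g z - g 0) / (z - 0)) = G"
      by (auto simp: fun_eq_iff G_def gA)
    ultimately show ?thesis by simp
  qed
  have G0: "G 0 = 1" by (simp add: G_def)
  have dg: "\<And>z. z \<in> B \<Longrightarrow> deriv g z = G z + z * deriv G z"
  proof -
    fix z assume z: "z \<in> B"
    have dG: "(G has_field_derivative deriv G z) (at z)"
      using Ghol Bo z by (meson holomorphic_derivI)
    have "((\<lambda>t. t * G t) has_field_derivative G z + z * deriv G z) (at z)"
      by (auto intro!: derivative_eq_intros dG)
    then show "deriv g z = G z + z * deriv G z" unfolding gG by (rule DERIV_imp_deriv)
  qed
  have d\<phi>1hol: "deriv \<phi>1 holomorphic_on B" using p1(1) Bo by (rule holomorphic_deriv)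
  have d\<phi>2hol: "deriv \<phi>2 holomorphic_on B" using p2(1) Bo by (rule holomorphic_deriv)
  have dGhol: "deriv G holomorphic_on B" using Ghol Bo by (rule holomorphic_deriv)
  have Gnz: "G z \<noteq> 0" if lam: "lam \<noteq> 0" and z: "z \<in> B" for z
  proof (cases "z = 0")
    case True then show ?thesis by (simp add: G0)
  next
    case False
    define R where "R = (\<lambda>z. Q z - z * deriv \<phi>1 z / \<phi>1 z - \<delta>)"
    have Rhol: "R holomorphic_on B" unfolding R_def
      using nz1 by (intro holomorphic_intros Qhol p1(1) d\<phi>1hol) auto
    have eq: "lam * y * deriv g y = R y * g y" if y: "y \<in> B" "g y \<noteq> 0" for y
    proof -
      have y0: "y \<noteq> 0" using y gA(2) by auto
      have "R y = lam * (y * deriv g y / g y)"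
        unfolding R_def Qz zlogdA_def zlogd_def using y0 by simp
      then show ?thesis using y by (simp add: field_simps)
    qed
    have "g z \<noteq> 0"
      by (rule g_nz[OF gA(1)[unfolded B_def] gA(2) gA(3) Rhol[unfolded B_def] lam])
        (use eq z False in \<open>auto simp: B_def\<close>)
    then show ?thesis using False by (simp add: G_def)
  qed
  define Gq where "Gq = (\<lambda>z. lam * (deriv G z / G z))"
  have Gqhol: "Gq holomorphic_on B"
  proof (cases "lam = 0")
    case True
    then have "Gq = (\<lambda>z. 0)" by (simp add: Gq_def fun_eq_iff)
    then show ?thesis by simp
  next
    case False
    then show ?thesis unfolding Gq_def using Gnz by (intro holomorphic_intros dGhol Ghol) auto
  qed
  have Qrep: "Q z - 1 = z * (Gq z + deriv \<phi>1 z / \<phi>1 z)" if z: "z \<in> B" for z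
  proof (cases "z = 0")
    case True then show ?thesis by (simp add: Q0)
  next
    case False
    show ?thesis
    proof (cases "lam = 0")
      case True
      then show ?thesis using ld False by (simp add: Qz zlogdA_def zlogd_def Gq_def)
    next
      case lam: False
      have Gz: "G z \<noteq> 0" using Gnz[OF lam z] .
      have "zlogdA g z = 1 + z * deriv G z / G z"
        unfolding zlogdA_def using False Gz dg[OF z] by (simp add: gG field_simps)
      then show ?thesis using ld by (simp add: Qz zlogd_def Gq_def algebra_simps)
    qed
  qed
  note L1 = nlog_props[OF p1(1)[unfolded B_def] nz1[unfolded B_def] p1(2)]
  note L2 = nlog_props[OF p2(1)[unfolded B_def] nz2[unfolded B_def] p2(2)]
  define P0 where "P0 = npow G (lam * of_real \<alpha>)"
  define P1 where "P1 = npow \<phi>1 (of_real \<alpha>)"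
  define P2 where "P2 = npow \<phi>2 (of_real \<beta>)"
  have P0props: "P0 holomorphic_on B \<and> P0 0 = 1 \<and> (\<forall>z\<in>B. deriv P0 z = of_real \<alpha> * Gq z * P0 z)"
  proof (cases "lam = 0")
    case True
    then have "P0 = (\<lambda>z. 1)" by (simp add: P0_def npow_def fun_eq_iff)
    then show ?thesis using True by (simp add: Gq_def)
  next
    case False
    note LG = nlog_props[OF Ghol[unfolded B_def] Gnz[OF False, unfolded B_def] G0]
    have "P0 holomorphic_on B" unfolding P0_def B_def by (rule npow_hol) (use LG in simp)
    moreover have "P0 0 = 1" using LG by (simp add: P0_def npow_def)
    moreover have "deriv P0 z = of_real \<alpha> * Gq z * P0 z" if z: "z \<in> B" for z
    proof -
      have "deriv P0 z = lam * of_real \<alpha> * deriv (nlog G) z * P0 z"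
        unfolding P0_def by (rule npow_deriv) (use LG z in \<open>auto simp: B_def\<close>)
      also have "deriv (nlog G) z = deriv G z / G z"
        by (rule nlog_deriv[OF Ghol[unfolded B_def] Gnz[OF False, unfolded B_def] G0]) (use z in \<open>auto simp: B_def\<close>)
      finally show ?thesis by (simp add: Gq_def)
    qed
    ultimately show ?thesis by blast
  qed
  have P0hol: "P0 holomorphic_on B" and P00: "P0 0 = 1" and P0d: "\<And>z. z \<in> B \<Longrightarrow> deriv P0 z = of_real \<alpha> * Gq z * P0 z"
    using P0props by auto
  have P1hol: "P1 holomorphic_on B" unfolding P1_def B_def by (rule npow_hol) (use L1 in simp)
  have P2hol: "P2 holomorphic_on B" unfolding P2_def B_def by (rule npow_hol) (use L2 in simp)
  have P10: "P1 0 = 1" using L1 by (simp add: P1_def npow_def)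
  have P20: "P2 0 = 1" using L2 by (simp add: P2_def npow_def)
  have P1d: "deriv P1 z = of_real \<alpha> * (deriv \<phi>1 z / \<phi>1 z) * P1 z" if z: "z \<in> B" for z
  proof -
    have "deriv P1 z = of_real \<alpha> * deriv (nlog \<phi>1) z * P1 z"
      unfolding P1_def by (rule npow_deriv) (use L1 z in \<open>auto simp: B_def\<close>)
    also have "deriv (nlog \<phi>1) z = deriv \<phi>1 z / \<phi>1 z"
      by (rule nlog_deriv[OF p1(1)[unfolded B_def] nz1[unfolded B_def] p1(2)]) (use z in \<open>auto simp: B_def\<close>)
    finally show ?thesis .
  qed
  have P2d: "deriv P2 z = of_real \<beta> * (deriv \<phi>2 z / \<phi>2 z) * P2 z" if z: "z \<in> B" for z
  proof -
    have "deriv P2 z = of_real \<beta> * deriv (nlog \<phi>2) z * P2 z"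
      unfolding P2_def by (rule npow_deriv) (use L2 z in \<open>auto simp: B_def\<close>)
    also have "deriv (nlog \<phi>2) z = deriv \<phi>2 z / \<phi>2 z"
      by (rule nlog_deriv[OF p2(1)[unfolded B_def] nz2[unfolded B_def] p2(2)]) (use z in \<open>auto simp: B_def\<close>)
    finally show ?thesis .
  qed
  have P0nz: "\<And>z. P0 z \<noteq> 0" and P1nz: "\<And>z. P1 z \<noteq> 0" and P2nz: "\<And>z. P2 z \<noteq> 0"
    by (simp_all add: P0_def P1_def P2_def npow_def)
  define \<Phi> where "\<Phi> = (\<lambda>z. P0 z * P1 z)"
  have \<Phi>hol: "\<Phi> holomorphic_on B" unfolding \<Phi>_def by (intro holomorphic_intros P0hol P1hol)
  have \<Phi>nz: "\<And>z. \<Phi> z \<noteq> 0" by (simp add: \<Phi>_def P0nz P1nz)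
  have \<Phi>0: "\<Phi> 0 = 1" by (simp add: \<Phi>_def P00 P10)
  have \<Phi>d: "z * deriv \<Phi> z = of_real \<alpha> * (Q z - 1) * \<Phi> z" if z: "z \<in> B" for z
  proof -
    have d0: "(P0 has_field_derivative deriv P0 z) (at z)" using P0hol Bo z by (meson holomorphic_derivI)
    have d1: "(P1 has_field_derivative deriv P1 z) (at z)" using P1hol Bo z by (meson holomorphic_derivI)
    have "deriv \<Phi> z = deriv P0 z * P1 z + P0 z * deriv P1 z"
      unfolding \<Phi>_def by (rule DERIV_imp_deriv) (auto intro!: derivative_eq_intros d0 d1)
    also have "\<dots> = of_real \<alpha> * (Gq z + deriv \<phi>1 z / \<phi>1 z) * \<Phi> z"
      using P0d[OF z] P1d[OF z] by (simp add: \<Phi>_def algebra_simps)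
    finally show ?thesis using Qrep[OF z] by (simp add: algebra_simps)
  qed
  define c where "c = \<alpha> + \<beta>"
  have cpos: "c > 0" using alpha beta unfolding c_def by simp
  define H where "H = (\<lambda>z. \<Phi> z * Q z)"
  have Hhol: "H holomorphic_on B" unfolding H_def by (intro holomorphic_intros \<Phi>hol Qhol)
  obtain A where Ahol: "A holomorphic_on B" and Aode: "\<And>z. z \<in> B \<Longrightarrow> z * deriv A z + of_real c * A z = H z"
    using ode_sol[OF Hhol[unfolded B_def] cpos] unfolding B_def by blast
  have A0: "of_real c * A 0 = 1" using Aode[OF B0] by (simp add: H_def \<Phi>0 Q0)
  define W where "W = (\<lambda>z. of_real c * A z / \<Phi> z)"
  have Whol: "W holomorphic_on B" unfolding W_def using \<Phi>nz by (intro holomorphic_intros Ahol \<Phi>hol) auto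
  have W0: "W 0 = 1" using A0 by (simp add: W_def \<Phi>0)
  have Wode: "z * deriv W z = of_real c * Q z - (of_real \<beta> + of_real \<alpha> * Q z) * W z" if z: "z \<in> B" for z
  proof -
    have dA: "(A has_field_derivative deriv A z) (at z)" using Ahol Bo z by (meson holomorphic_derivI)
    have dP: "(\<Phi> has_field_derivative deriv \<Phi> z) (at z)" using \<Phi>hol Bo z by (meson holomorphic_derivI)
    have dW: "deriv W z = (of_real c * deriv A z * \<Phi> z - of_real c * A z * deriv \<Phi> z) / (\<Phi> z * \<Phi> z)"
      unfolding W_def by (rule DERIV_imp_deriv) (auto intro!: derivative_eq_intros dA dP simp: \<Phi>nz)
    have Wz: "W z = of_real c * A z / \<Phi> z" by (simp add: W_def)
    have "z * deriv W z = of_real c * (z * deriv A z) / \<Phi> z - W z * (z * deriv \<Phi> z) / \<Phi> z"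
      unfolding dW Wz using \<Phi>nz[of z] by (simp add: field_simps)
    also have "\<dots> = of_real c * (H z - of_real c * A z) / \<Phi> z - W z * (of_real \<alpha> * (Q z - 1) * \<Phi> z) / \<Phi> z"
    proof -
      have e1: "z * deriv A z = H z - of_real c * A z" using Aode[OF z] by (simp add: algebra_simps)
      show ?thesis unfolding e1 \<Phi>d[OF z] ..
    qed
    also have "\<dots> = of_real c * Q z - of_real c * W z - W z * (of_real \<alpha> * (Q z - 1))"
      using \<Phi>nz[of z] by (simp add: H_def W_def field_simps)
    also have "\<dots> = of_real c * Q z - (of_real \<beta> + of_real \<alpha> * Q z) * W z"
      by (simp add: c_def algebra_simps)
    finally show ?thesis .
  qed
  have pos: "\<forall>z\<in>ball 0 1. c * Re (W z) - \<alpha> * (cmod (W z))^2 > 0"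
    by (rule pos_main[OF Whol[unfolded B_def] W0 ReQ[unfolded B_def] c_def alpha _ Wode[unfolded B_def]])
      (use beta in auto)
  have Wnz: "W z \<noteq> 0" if "z \<in> B" for z using pos that cpos unfolding B_def by fastforce
  have ReW: "Re (of_real c / W z) > \<alpha>" if z: "z \<in> B" for z
  proof -
    have n0: "(cmod (W z))^2 > 0" using Wnz[OF z] by simp
    have "Re (of_real c / W z) = c * Re (W z) / (cmod (W z))^2" by (simp add: Re_divide')
    also have "\<dots> > \<alpha>" using pos z n0 unfolding B_def by (simp add: field_simps)
    finally show ?thesis .
  qed
  have Keq: "K z = W z / P2 z" if z: "z \<in> B" for z
  proof (cases "z = 0")
    case True then show ?thesis by (simp add: K_def W0 P20)
  next
    case False
    have ci: "((\<lambda>t. t powr (of_real c - 1) * H t) has_contour_integral (z powr of_real c * A z)) (linepath 0 z)"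
      by (rule cint[OF Hhol[unfolded B_def] Ahol[unfolded B_def] cpos Aode[unfolded B_def]]) (use z False in \<open>auto simp: B_def\<close>)
    have feq: "(\<lambda>t. npow (\<lambda>t. if t = 0 then 1 else g t / t) (lam * of_real \<alpha>) t
                  * npow \<phi>1 (of_real \<alpha>) t * t powr (of_real (\<alpha> + \<beta> - 1)) * Q t) =
               (\<lambda>t. t powr (of_real c - 1) * H t)"
      by (auto simp: fun_eq_iff H_def \<Phi>_def P0_def P1_def c_def G_def[symmetric])
    have ceq: "contour_integral (linepath 0 z)
             (\<lambda>t. npow (\<lambda>t. if t = 0 then 1 else g t / t) (lam * of_real \<alpha>) t
                  * npow \<phi>1 (of_real \<alpha>) t * t powr (of_real (\<alpha> + \<beta> - 1)) * Q t) = z powr of_real c * A z"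
      unfolding feq using ci by (rule contour_integral_unique)
    have zp: "z powr of_real c \<noteq> 0" using False by simp
    have "K z = of_real c / (P2 z * P0 z * P1 z * z powr (of_real c)) * (z powr of_real c * A z)"
      unfolding K_def using False ceq by (simp add: P0_def P1_def P2_def c_def G_def[symmetric])
    also have "\<dots> = W z / P2 z" using zp P0nz P1nz P2nz
      by (simp add: W_def \<Phi>_def field_simps)
    finally show ?thesis .
  qed
  have Khol: "K holomorphic_on B"
    by (rule holomorphic_transform[of "\<lambda>z. W z / P2 z"]) (use P2nz in \<open>auto intro!: holomorphic_intros Whol P2hol simp: Keq\<close>)
  have K0: "K 0 = 1" by (simp add: K_def)
  have Knz: "\<And>z. z \<in> B \<Longrightarrow> K z \<noteq> 0" using Keq Wnz P2nz by simp
  note LK = nlog_props[OF Khol[unfolded B_def] Knz[unfolded B_def] K0]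
  define e where "e = 1 / (\<eta> * of_real \<beta>)"
  define E where "E = npow K e"
  have Ehol: "E holomorphic_on B" unfolding E_def B_def by (rule npow_hol) (use LK in simp)
  have E0: "E 0 = 1" using LK by (simp add: E_def npow_def)
  have Enz: "\<And>z. E z \<noteq> 0" by (simp add: E_def npow_def)
  have Ed: "deriv E z = e * (deriv K z / K z) * E z" if z: "z \<in> B" for z
  proof -
    have "deriv E z = e * deriv (nlog K) z * E z"
      unfolding E_def by (rule npow_deriv) (use LK z in \<open>auto simp: B_def\<close>)
    also have "deriv (nlog K) z = deriv K z / K z"
      by (rule nlog_deriv[OF Khol[unfolded B_def] Knz[unfolded B_def] K0]) (use z in \<open>auto simp: B_def\<close>)
    finally show ?thesis .
  qed
  have FE: "F = (\<lambda>z. z * E z)" by (simp add: F_def E_def e_def)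
  have Fhol: "F holomorphic_on B" unfolding FE by (intro holomorphic_intros Ehol)
  have dF: "deriv F z = E z + z * deriv E z" if z: "z \<in> B" for z
  proof -
    have dE: "(E has_field_derivative deriv E z) (at z)" using Ehol Bo z by (meson holomorphic_derivI)
    show ?thesis unfolding FE by (rule DERIV_imp_deriv) (auto intro!: derivative_eq_intros dE)
  qed
  have dK: "deriv W z = deriv K z * P2 z + K z * deriv P2 z" if z: "z \<in> B" for z
  proof -
    have dK': "(K has_field_derivative deriv K z) (at z)" using Khol Bo z by (meson holomorphic_derivI)
    have dP2: "(P2 has_field_derivative deriv P2 z) (at z)" using P2hol Bo z by (meson holomorphic_derivI)
    have "deriv W z = deriv (\<lambda>z. K z * P2 z) z"
      by (rule complex_derivative_transform_within_open[OF Whol _ Bo z])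
        (use P2nz in \<open>auto intro!: holomorphic_intros Khol P2hol simp: Keq\<close>)
    also have "\<dots> = deriv K z * P2 z + K z * deriv P2 z"
      by (rule DERIV_imp_deriv) (auto intro!: derivative_eq_intros dK' dP2)
    finally show ?thesis .
  qed
  have part1: "\<forall>z\<in>ball 0 1. K z \<noteq> 0" using Knz unfolding B_def by blast
  have part3: "\<forall>z\<in>ball 0 1 - {0}. F z / z \<noteq> 0" using Enz by (simp add: FE)
  have part4: "Re ((\<eta> * zlogdA F z + zlogd \<phi>2 z + \<gamma>) / (lam * zlogdA g z + zlogd \<phi>1 z + \<delta>)) > 0"
    if z: "z \<in> B" for z
  proof (cases "z = 0")
    case True
    then show ?thesis using eg ld by (simp add: zlogdA_def zlogd_def)
  next
    case False
    have den: "lam * zlogdA g z + zlogd \<phi>1 z + \<delta> = Q z" by (simp add: Qz)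
    have bnz: "of_real \<beta> \<noteq> (0::complex)" using beta by simp
    have KP: "K z * P2 z = W z" using Keq[OF z] P2nz[of z] by simp
    have zK: "z * deriv K z / K z = z * deriv W z / W z - of_real \<beta> * (z * deriv \<phi>2 z / \<phi>2 z)"
    proof -
      have "deriv K z = (deriv W z - K z * deriv P2 z) / P2 z" using dK[OF z] P2nz[of z] by (simp add: field_simps)
      then have "deriv K z / K z = deriv W z / W z - deriv P2 z / P2 z"
        using Knz[OF z] P2nz[of z] Wnz[OF z] KP[symmetric] by (simp add: field_simps)
      then have h2: "deriv K z / K z = deriv W z / W z - of_real \<beta> * (deriv \<phi>2 z / \<phi>2 z)"
        using P2d[OF z] P2nz[of z] by simp
      have "z * deriv K z / K z = z * (deriv K z / K z)" by simp
      also have "\<dots> = z * (deriv W z / W z - of_real \<beta> * (deriv \<phi>2 z / \<phi>2 z))" by (simp only: h2)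
      also have "\<dots> = z * deriv W z / W z - of_real \<beta> * (z * deriv \<phi>2 z / \<phi>2 z)"
        by (simp add: algebra_simps)
      finally show ?thesis .
    qed
    have zF: "zlogdA F z = 1 + e * (z * deriv K z / K z)"
      unfolding zlogdA_def using False Enz[of z] Ed[OF z] dF[OF z] by (simp add: FE field_simps)
    have num: "\<eta> * zlogdA F z + zlogd \<phi>2 z + \<gamma> = 1 + z * deriv W z / (of_real \<beta> * W z)"
    proof -
      have "\<eta> * zlogdA F z + zlogd \<phi>2 z + \<gamma> = (\<eta> + \<gamma>) + \<eta> * e * (z * deriv K z / K z) + z * deriv \<phi>2 z / \<phi>2 z"
        unfolding zF zlogd_def by (simp add: algebra_simps)
      also have "\<eta> * e = 1 / of_real \<beta>" using eta bnz by (simp add: e_def)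
      finally show ?thesis unfolding zK eg using bnz Wnz[OF z] by (simp add: field_simps)
    qed
    also have "\<dots> = Q z * ((of_real c / W z - of_real \<alpha>) / of_real \<beta>)"
      unfolding Wode[OF z] using bnz Wnz[OF z] by (simp add: c_def field_simps)
    finally have "(\<eta> * zlogdA F z + zlogd \<phi>2 z + \<gamma>) / (lam * zlogdA g z + zlogd \<phi>1 z + \<delta>) =
        (of_real c / W z - of_real \<alpha>) / of_real \<beta>"
      unfolding den using Qnz[OF z] by simp
    moreover have "Re ((of_real c / W z - of_real \<alpha>) / of_real \<beta>) = (Re (of_real c / W z) - \<alpha>) / \<beta>"
      by (simp add: Re_divide_of_real)
    moreover have "(Re (of_real c / W z) - \<alpha>) / \<beta> > 0" using ReW[OF z] beta by simp
    ultimately show ?thesis by simp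
  qed
  have anF: "An n F"
  proof -
    have BB: "B = ball 0 1" by (simp add: B_def)
    have nm: "n = Suc (n - 1)" using n by simp
    have Ghol': "G holomorphic_on ball 0 1" using Ghol by (simp add: BB)
    have ZdG: "Zf (n-1) (deriv G)"
      unfolding Zf_def
    proof (intro allI impI)
      fix j assume j: "j < n - 1"
      have "(deriv ^^ (Suc (Suc j))) g 0 = of_nat (Suc (Suc j)) * (deriv ^^ (Suc (Suc j) - 1)) G 0"
        unfolding gG by (rule hd_zmul[OF Ghol'])
      moreover have "(deriv ^^ (Suc (Suc j))) g 0 = 0" using gA(4)[of "Suc (Suc j)"] j by simp
      ultimately have "(deriv ^^ Suc j) G 0 = 0" by (simp del: of_nat_Suc)
      then show "(deriv ^^ j) (deriv G) 0 = 0" by (simp only: hd_Suc)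
    qed
    have Zd1: "Zf (n-1) (deriv \<phi>1)"
      unfolding Zf_def
    proof (intro allI impI)
      fix j assume j: "j < n - 1"
      have "(deriv ^^ Suc j) \<phi>1 0 = 0" using p1(3)[of "Suc j"] j by simp
      then show "(deriv ^^ j) (deriv \<phi>1) 0 = 0" by (simp only: hd_Suc)
    qed
    have Zd2: "Zf (n-1) (deriv \<phi>2)"
      unfolding Zf_def
    proof (intro allI impI)
      fix j assume j: "j < n - 1"
      have "(deriv ^^ Suc j) \<phi>2 0 = 0" using p2(3)[of "Suc j"] j by simp
      then show "(deriv ^^ j) (deriv \<phi>2) 0 = 0" by (simp only: hd_Suc)
    qed
    have q1hol: "(\<lambda>z. deriv \<phi>1 z / \<phi>1 z) holomorphic_on ball 0 1"
      using nz1 unfolding BB by (intro holomorphic_intros d\<phi>1hol[unfolded BB] p1(1)[unfolded BB]) auto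
    have q2hol: "(\<lambda>z. deriv \<phi>2 z / \<phi>2 z) holomorphic_on ball 0 1"
      using nz2 unfolding BB by (intro holomorphic_intros d\<phi>2hol[unfolded BB] p2(1)[unfolded BB]) auto
    have Zq1: "Zf (n-1) (\<lambda>z. deriv \<phi>1 z / \<phi>1 z)"
    proof (rule Zf_div[OF q1hol p1(1)[unfolded BB]])
      show "\<phi>1 0 \<noteq> 0" using p1(2) by simp
      have "Zf (n-1) (\<lambda>w. deriv \<phi>1 w / \<phi>1 w * \<phi>1 w) = Zf (n-1) (deriv \<phi>1)"
        by (rule Zf_cong[OF holomorphic_on_mult[OF q1hol p1(1)[unfolded BB]] d\<phi>1hol[unfolded BB]]) (use nz1 in \<open>auto simp: BB\<close>)
      then show "Zf (n-1) (\<lambda>w. deriv \<phi>1 w / \<phi>1 w * \<phi>1 w)" using Zd1 by simp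
    qed
    have Zq2: "Zf (n-1) (\<lambda>z. deriv \<phi>2 z / \<phi>2 z)"
    proof (rule Zf_div[OF q2hol p2(1)[unfolded BB]])
      show "\<phi>2 0 \<noteq> 0" using p2(2) by simp
      have "Zf (n-1) (\<lambda>w. deriv \<phi>2 w / \<phi>2 w * \<phi>2 w) = Zf (n-1) (deriv \<phi>2)"
        by (rule Zf_cong[OF holomorphic_on_mult[OF q2hol p2(1)[unfolded BB]] d\<phi>2hol[unfolded BB]]) (use nz2 in \<open>auto simp: BB\<close>)
      then show "Zf (n-1) (\<lambda>w. deriv \<phi>2 w / \<phi>2 w * \<phi>2 w)" using Zd2 by simp
    qed
    have ZGq: "Zf (n-1) Gq"
    proof (cases "lam = 0")
      case True
      then have "Gq = (\<lambda>z. 0)" by (simp add: Gq_def fun_eq_iff)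
      then show ?thesis by (simp add: Zf_def)
    next
      case False
      have qGhol: "(\<lambda>z. deriv G z / G z) holomorphic_on ball 0 1"
        using Gnz[OF False] unfolding BB by (intro holomorphic_intros dGhol[unfolded BB] Ghol') auto
      have "Zf (n-1) (\<lambda>z. deriv G z / G z)"
      proof (rule Zf_div[OF qGhol Ghol'])
        show "G 0 \<noteq> 0" using G0 by simp
        have "Zf (n-1) (\<lambda>w. deriv G w / G w * G w) = Zf (n-1) (deriv G)"
          by (rule Zf_cong[OF holomorphic_on_mult[OF qGhol Ghol'] dGhol[unfolded BB]]) (use Gnz[OF False] in \<open>auto simp: BB\<close>)
        then show "Zf (n-1) (\<lambda>w. deriv G w / G w * G w)" using ZdG by simp
      qed
      then have "Zf (n-1) (\<lambda>z. lam * (deriv G z / G z))"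
        by (intro Zf_mul2[OF _ qGhol]) simp
      then show ?thesis by (simp add: Gq_def)
    qed
    have ZQ: "Zf n (\<lambda>z. Q z - 1)"
    proof -
      have h1: "(\<lambda>z. Gq z + deriv \<phi>1 z / \<phi>1 z) holomorphic_on ball 0 1"
        by (intro holomorphic_intros q1hol Gqhol[unfolded BB])
      have "Zf (Suc (n-1)) (\<lambda>z. z * (Gq z + deriv \<phi>1 z / \<phi>1 z))"
        by (rule Zf_zmul[OF h1 Zf_add[OF Gqhol[unfolded BB] q1hol ZGq Zq1]])
      moreover have "Zf (Suc (n-1)) (\<lambda>z. Q z - 1) = Zf (Suc (n-1)) (\<lambda>z. z * (Gq z + deriv \<phi>1 z / \<phi>1 z))"
      proof -
        have hQ: "(\<lambda>z. Q z - 1) holomorphic_on ball 0 1" by (intro holomorphic_intros Qhol[unfolded BB])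
        have hR: "(\<lambda>z. z * (Gq z + deriv \<phi>1 z / \<phi>1 z)) holomorphic_on ball 0 1"
          by (intro holomorphic_intros h1)
        show ?thesis by (rule Zf_cong[OF hQ hR]) (auto intro!: Qrep simp: BB)
      qed
      ultimately show ?thesis using nm by metis
    qed
    have Whol': "W holomorphic_on ball 0 1" using Whol by (simp add: BB)
    have dWhol: "deriv W holomorphic_on ball 0 1" using holomorphic_deriv[OF Whol' open_ball] .
    have ZW: "Zf n (\<lambda>z. W z - 1)"
      unfolding Zf_def
    proof (intro allI impI)
      fix j assume j: "j < n"
      show "(deriv ^^ j) (\<lambda>z. W z - 1) 0 = 0"
      proof (cases j)
        case 0 then show ?thesis using W0 by simp
      next
        case (Suc i)
        have Wm1: "(deriv ^^ j) (\<lambda>z. W z - 1) 0 = (deriv ^^ j) W 0"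
          using higher_deriv_diff[OF Whol' holomorphic_on_const open_ball, of 0 j 1] Suc by simp
        have ode2: "z * deriv W z + of_real c * (W z - 1) = (Q z - 1) * (of_real c - of_real \<alpha> * W z)"
          if z: "z \<in> ball 0 1" for z
          using Wode[of z] z by (simp add: BB c_def algebra_simps)
        have "(deriv ^^ j) (\<lambda>z. z * deriv W z + of_real c * (W z - 1)) 0 =
              (deriv ^^ j) (\<lambda>z. (Q z - 1) * (of_real c - of_real \<alpha> * W z)) 0"
          by (rule higher_deriv_transform_within_open[OF _ _ open_ball _ ode2])
            (auto intro!: holomorphic_intros Whol' dWhol Qhol[unfolded BB])
        also have "\<dots> = 0"
        proof -
          have hQ: "(\<lambda>z. Q z - 1) holomorphic_on ball 0 1" by (intro holomorphic_intros Qhol[unfolded BB])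
          have hR: "(\<lambda>z. of_real c - of_real \<alpha> * W z) holomorphic_on ball 0 1"
            by (intro holomorphic_intros Whol')
          show ?thesis using Zf_mul[OF hQ hR ZQ] j by (simp add: Zf_def)
        qed
        finally have e0: "(deriv ^^ j) (\<lambda>z. z * deriv W z + of_real c * (W z - 1)) 0 = 0" .
        have "(deriv ^^ j) (\<lambda>z. z * deriv W z + of_real c * (W z - 1)) 0 =
              (deriv ^^ j) (\<lambda>z. z * deriv W z) 0 + (deriv ^^ j) (\<lambda>z. of_real c * (W z - 1)) 0"
          by (rule higher_deriv_add) (auto intro!: holomorphic_intros Whol' dWhol)
        also have "(deriv ^^ j) (\<lambda>z. z * deriv W z) 0 = of_nat j * (deriv ^^ (j - 1)) (deriv W) 0"
          by (rule hd_zmul[OF dWhol])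
        also have "(deriv ^^ (j - 1)) (deriv W) 0 = (deriv ^^ j) W 0"
          using Suc by (simp only: hd_Suc diff_Suc_1)
        also have "(deriv ^^ j) (\<lambda>z. of_real c * (W z - 1)) 0 = of_real c * (deriv ^^ j) (\<lambda>z. W z - 1) 0"
          by (rule higher_deriv_cmult) (auto intro!: holomorphic_intros Whol')
        finally have "(of_nat j + of_real c) * (deriv ^^ j) W 0 = 0"
          using e0 Wm1 by (simp add: algebra_simps)
        moreover have "of_nat j + complex_of_real c \<noteq> 0"
        proof -
          have "of_nat j + complex_of_real c = of_real (real j + c)" by simp
          moreover have "real j + c > 0" using cpos by simp
          ultimately show ?thesis by (metis of_real_eq_0_iff order_less_irrefl)
        qed
        ultimately show ?thesis using Wm1 by simp
      qed
    qed
    have ZdW: "Zf (n-1) (deriv W)"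
      unfolding Zf_def
    proof (intro allI impI)
      fix j assume j: "j < n - 1"
      have "(deriv ^^ Suc j) (\<lambda>z. W z - 1) 0 = (deriv ^^ Suc j) W 0"
        using higher_deriv_diff[OF Whol' holomorphic_on_const open_ball, of 0 "Suc j" 1] by simp
      moreover have "(deriv ^^ Suc j) (\<lambda>z. W z - 1) 0 = 0"
      proof -
        have "Suc j < n" using j by simp
        then show ?thesis using ZW unfolding Zf_def by blast
      qed
      ultimately show "(deriv ^^ j) (deriv W) 0 = 0" by (simp only: hd_Suc)
    qed
    have P2hol': "P2 holomorphic_on ball 0 1" using P2hol by (simp add: BB)
    have dP2hol: "deriv P2 holomorphic_on ball 0 1" using holomorphic_deriv[OF P2hol' open_ball] .
    have Khol': "K holomorphic_on ball 0 1" using Khol by (simp add: BB)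
    have dKhol: "deriv K holomorphic_on ball 0 1" using holomorphic_deriv[OF Khol' open_ball] .
    have ZdP2: "Zf (n-1) (deriv P2)"
    proof -
      have h1: "(\<lambda>z. of_real \<beta> * (deriv \<phi>2 z / \<phi>2 z)) holomorphic_on ball 0 1"
        by (intro holomorphic_intros q2hol)
      have "Zf (n-1) (\<lambda>z. of_real \<beta> * (deriv \<phi>2 z / \<phi>2 z))"
        by (rule Zf_mul2[OF _ q2hol Zq2]) simp
      then have "Zf (n-1) (\<lambda>z. of_real \<beta> * (deriv \<phi>2 z / \<phi>2 z) * P2 z)"
        by (rule Zf_mul[OF h1 P2hol'])
      moreover have "Zf (n-1) (\<lambda>z. of_real \<beta> * (deriv \<phi>2 z / \<phi>2 z) * P2 z) = Zf (n-1) (deriv P2)"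
        by (rule Zf_cong[OF holomorphic_on_mult[OF h1 P2hol'] dP2hol]) (auto simp: P2d BB)
      ultimately show ?thesis by simp
    qed
    have ZdK: "Zf (n-1) (deriv K)"
    proof (rule Zf_div[OF dKhol P2hol'])
      show "P2 0 \<noteq> 0" using P20 by simp
      have "Zf (n-1) (\<lambda>w. deriv W w - K w * deriv P2 w)"
        by (rule Zf_diff[OF dWhol holomorphic_on_mult[OF Khol' dP2hol] ZdW Zf_mul2[OF Khol' dP2hol ZdP2]])
      moreover have "Zf (n-1) (\<lambda>w. deriv K w * P2 w) = Zf (n-1) (\<lambda>w. deriv W w - K w * deriv P2 w)"
        by (rule Zf_cong[OF holomorphic_on_mult[OF dKhol P2hol'] holomorphic_on_diff[OF dWhol holomorphic_on_mult[OF Khol' dP2hol]]])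
          (auto simp: dK BB)
      ultimately show "Zf (n-1) (\<lambda>w. deriv K w * P2 w)" by simp
    qed
    have qKhol: "(\<lambda>z. deriv K z / K z) holomorphic_on ball 0 1"
      using Knz unfolding BB by (intro holomorphic_intros dKhol Khol') auto
    have ZLK: "Zf (n-1) (\<lambda>z. deriv K z / K z)"
    proof (rule Zf_div[OF qKhol Khol'])
      show "K 0 \<noteq> 0" using K0 by simp
      have "Zf (n-1) (\<lambda>w. deriv K w / K w * K w) = Zf (n-1) (deriv K)"
        by (rule Zf_cong[OF holomorphic_on_mult[OF qKhol Khol'] dKhol]) (use Knz in \<open>auto simp: BB\<close>)
      then show "Zf (n-1) (\<lambda>w. deriv K w / K w * K w)" using ZdK by simp
    qed
    have Ehol': "E holomorphic_on ball 0 1" using Ehol by (simp add: BB)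
    have dEhol: "deriv E holomorphic_on ball 0 1" using holomorphic_deriv[OF Ehol' open_ball] .
    have ZdE: "Zf (n-1) (deriv E)"
    proof -
      have h1: "(\<lambda>z. e * (deriv K z / K z)) holomorphic_on ball 0 1"
        by (intro holomorphic_intros qKhol)
      have "Zf (n-1) (\<lambda>z. e * (deriv K z / K z))"
        by (rule Zf_mul2[OF _ qKhol ZLK]) simp
      then have "Zf (n-1) (\<lambda>z. e * (deriv K z / K z) * E z)"
        by (rule Zf_mul[OF h1 Ehol'])
      moreover have "Zf (n-1) (\<lambda>z. e * (deriv K z / K z) * E z) = Zf (n-1) (deriv E)"
        by (rule Zf_cong[OF holomorphic_on_mult[OF h1 Ehol'] dEhol]) (auto simp: Ed BB)
      ultimately show ?thesis by simp
    qed
    have hk: "(deriv ^^ k) F 0 = 0" if k: "2 \<le> k" "k \<le> n" for k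
    proof -
      have "(deriv ^^ k) F 0 = of_nat k * (deriv ^^ (k - 1)) E 0"
        unfolding FE by (rule hd_zmul[OF Ehol'])
      also have "(deriv ^^ (k - 1)) E 0 = (deriv ^^ (k - 2)) (deriv E) 0"
      proof -
        have "k - 1 = Suc (k - 2)" using k by simp
        then show ?thesis by (simp only: hd_Suc)
      qed
      also have "\<dots> = 0" using ZdE k unfolding Zf_def by simp
      finally show ?thesis by simp
    qed
    have "deriv F 0 = 1" using dF[OF B0] E0 by simp
    moreover have "F 0 = 0" by (simp add: FE)
    moreover have "F holomorphic_on ball 0 1" using Fhol by (simp add: BB)
    ultimately show ?thesis unfolding An_def using hk by blast
  qed
  show ?thesis using part1 anF part3 part4 unfolding B_def by blast
qed

end
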